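(* Let $\beta=(\beta_1,\ldots,\beta_\ell)$ be a composition of $N$ and let $\mathcal{Q}_\beta$ be the corresponding parabolic subposet of $1<\cdots<N$. Then $\mathcal{P}\mapsto\mathrm{fat}_\beta(\mathcal{P})$ is a bijection from the set of subposets of the total order $1<2<\cdots<\ell$ onto the set of Levi compatible subposets of $\mathcal{Q}_\beta$.
   Context: Fix a prime power $q$ and the finite field $\mathbb{F}_q$; $\mathrm{GL}_N=\mathrm{GL}_N(\mathbb{F}_q)$. A subposet of a poset $(X,\prec_{\mathcal{R}})$ is a strict partial order $\prec_{\mathcal{P}}$ on the same set with $a\prec_{\mathcal{P}}b\Rightarrow a\prec_{\mathcal{R}}b$. For a subposet $\mathcal{R}$ of $1<\cdots<N$, $\mathfrak{ut}_{\mathcal{R}}=\{x\in M_N(\mathbb{F}_q)\mid x_{ab}\ne0\Rightarrow a\prec_{\mathcal{R}}b\}$ and $\mathrm{UT}_{\mathcal{R}}=\mathrm{Id}_N+\mathfrak{ut}_{\mathcal{R}}$. For a composition $\beta=(\beta_1,\ldots,\beta_\ell)$ of $N$ let $\mathcal{Q}_i=\{\beta_1+\cdots+\beta_{i-1}+1,\ldots,\beta_1+\cdots+\beta_i\}$, and let $\mathcal{Q}_\beta$ be the poset on $\{1,\ldots,N\}$ with $a\prec b$ iff $a\in\mathcal{Q}_i,b\in\mathcal{Q}_j$, $i<j$. Let $L_\beta\cong\mathrm{GL}_{\beta_1}\times\cdots\times\mathrm{GL}_{\beta_\ell}$ be the block-diagonal subgroup of $\mathrm{GL}_N$ with diagonal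 blocks indexed by $\mathcal{Q}_1,\ldots,\mathcal{Q}_\ell$. A subposet $\mathcal{R}$ of $\mathcal{Q}_\beta$ is Levi compatible if $L_\beta\subseteq N_{\mathrm{GL}_N}(\mathrm{UT}_{\mathcal{R}})$. For a subposet $\mathcal{P}$ of $1<\cdots<\ell$, $\mathrm{fat}_\beta(\mathcal{P})$ is the subposet of $\mathcal{Q}_\beta$ with $a\prec b$ iff $a\in\mathcal{Q}_i$, $b\in\mathcal{Q}_j$ with $i\prec_{\mathcal{P}}j$. *)

theory Defs
  imports "Jordan_Normal_Form.Matrix"
begin

definition strict_po :: "nat set \<Rightarrow> (nat \<times> nat) set \<Rightarrow> bool" where
  "strict_po X P \<longleftrightarrow> P \<subseteq> X \<times> X \<and> irrefl P \<and> trans P"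

definition subposet :: "nat set \<Rightarrow> (nat \<times> nat) set \<Rightarrow> (nat \<times> nat) set \<Rightarrow> bool" where
  "subposet X P R \<longleftrightarrow> strict_po X P \<and> P \<subseteq> R"

definition chain_order :: "nat \<Rightarrow> (nat \<times> nat) set" where
  "chain_order n = {(a, b). 1 \<le> a \<and> a < b \<and> b \<le> n}"

definition composition :: "nat list \<Rightarrow> nat \<Rightarrow> bool" where
  "composition \<beta> N \<longleftrightarrow> (\<forall>b \<in> set \<beta>. 0 < b) \<and> sum_list \<beta> = N"

definition blk :: "nat list \<Rightarrow> nat \<Rightarrow> nat set" where
  "blk \<beta> i = {sum_list (take (i - 1) \<beta>) + 1 .. sum_list (take i \<beta>)}"

definition Qpos :: "nat list \<Rightarrow> (nat \<times> nat) set" where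
  "Qpos \<beta> = {(a, b). \<exists>i j. 1 \<le> i \<and> i < j \<and> j \<le> length \<beta> \<and> a \<in> blk \<beta> i \<and> b \<in> blk \<beta> j}"

definition fat :: "nat list \<Rightarrow> (nat \<times> nat) set \<Rightarrow> (nat \<times> nat) set" where
  "fat \<beta> P = {(a, b). \<exists>i j. (i, j) \<in> P \<and> a \<in> blk \<beta> i \<and> b \<in> blk \<beta> j}"

(* Matrices are N x N matrices of Jordan_Normal_Form, indexed 0..N-1;
   the paper's row/column index a in {1..N} corresponds to index a - 1. *)

definition GL :: "nat \<Rightarrow> 'a::field mat set" where
  "GL N = {g \<in> carrier_mat N N. invertible_mat g}"

definition ut :: "nat \<Rightarrow> (nat \<times> nat) set \<Rightarrow> 'a::field mat set" where
  "ut N R = {x \<in> carrier_mat N N. \<forall>i<N. \<forall>j<N. x $$ (i, j) \<noteq> 0 \<longrightarrow> (i + 1, j + 1) \<in> R}"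

definition UT :: "nat \<Rightarrow> (nat \<times> nat) set \<Rightarrow> 'a::field mat set" where
  "UT N R = (\<lambda>x. 1\<^sub>m N + x) ` ut N R"

definition normalizer :: "nat \<Rightarrow> 'a::field mat set \<Rightarrow> 'a mat set" where
  "normalizer N H = {g \<in> GL N. \<forall>h \<in> carrier_mat N N. g * h = 1\<^sub>m N \<and> h * g = 1\<^sub>m N
        \<longrightarrow> {g * u * h | u. u \<in> H} = H}"

definition Levi :: "nat list \<Rightarrow> 'a::field mat set" where
  "Levi \<beta> = {g \<in> GL (sum_list \<beta>). \<forall>i<sum_list \<beta>. \<forall>j<sum_list \<beta>.
        g $$ (i, j) \<noteq> 0 \<longrightarrow> (\<exists>k. 1 \<le> k \<and> k \<le> length \<beta> \<and> i + 1 \<in> blk \<beta> k \<and> j + 1 \<in> blk \<beta> k)}"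

definition levi_compatible :: "'a::field itself \<Rightarrow> nat list \<Rightarrow> (nat \<times> nat) set \<Rightarrow> bool" where
  "levi_compatible TYPE('a) \<beta> R \<longleftrightarrow>
     subposet {1..sum_list \<beta>} R (Qpos \<beta>) \<and>
     (Levi \<beta> :: 'a mat set) \<subseteq> normalizer (sum_list \<beta>) (UT (sum_list \<beta>) R)"

end

theory Submission imports Defs begin

lemma S_mono: "i \<le> j \<Longrightarrow> sum_list (take i \<beta>) \<le> sum_list (take j (\<beta>::nat list))"
proof -
  assume "i \<le> j"
  then obtain d where "j = i + d" using le_Suc_ex by blast
  then show ?thesis by (simp add: take_add)
qed

lemma blk_range:
  assumes "a \<in> blk \<beta> i" shows "1 \<le> i \<and> i \<le> length \<beta>"
proof (rule ccontr)
  assume "\<not> ?thesis"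
  then have "i = 0 \<or> i > length \<beta>" by auto
  then show False
  proof
    assume "i = 0" then show False using assms by (simp add: blk_def)
  next
    assume "i > length \<beta>"
    then have "take (i-1) \<beta> = \<beta>" "take i \<beta> = \<beta>" by auto
    then show False using assms by (simp add: blk_def)
  qed
qed

lemma blk_unique:
  assumes "a \<in> blk \<beta> i" "a \<in> blk \<beta> j" shows "i = j"
proof (rule ccontr)
  assume "i \<noteq> j"
  then have "i < j \<or> j < i" by auto
  then show False
  proof
    assume "i < j"
    then have "sum_list (take i \<beta>) \<le> sum_list (take (j-1) \<beta>)" by (intro S_mono) auto
    then show False using assms by (auto simp: blk_def)
  next
    assume "j < i"
    then have "sum_list (take j \<beta>) \<le> sum_list (take (i-1) \<beta>)" by (intro S_mono) auto
    then show False using assms by (auto simp: blk_def)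
  qed
qed

lemma blk_sub:
  assumes "composition \<beta> N" "a \<in> blk \<beta> i" shows "1 \<le> a \<and> a \<le> N"
proof -
  have "i \<le> length \<beta>" using blk_range[OF assms(2)] by auto
  then have "sum_list (take i \<beta>) \<le> sum_list (take (length \<beta>) \<beta>)" by (rule S_mono)
  then show ?thesis using assms by (auto simp: blk_def composition_def)
qed

lemma blk_nonempty:
  assumes "composition \<beta> N" "1 \<le> i" "i \<le> length \<beta>" shows "\<exists>a. a \<in> blk \<beta> i"
proof -
  have "take i \<beta> = take (i-1) \<beta> @ [\<beta> ! (i-1)]"
    using assms(2,3) by (cases i) (auto simp: take_Suc_conv_app_nth)
  moreover have "\<beta> ! (i-1) > 0" using assms by (auto simp: composition_def)
  ultimately have "sum_list (take (i-1) \<beta>) + 1 \<in> blk \<beta> i" by (auto simp: blk_def)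
  then show ?thesis by blast
qed

lemma blk_cover:
  assumes "composition \<beta> N" "1 \<le> a" "a \<le> N" shows "\<exists>k. a \<in> blk \<beta> k"
proof -
  let ?S = "\<lambda>k. sum_list (take k \<beta>)"
  have ex: "\<exists>k. a \<le> ?S k" using assms by (intro exI[of _ "length \<beta>"]) (auto simp: composition_def)
  define k where "k = (LEAST k. a \<le> ?S k)"
  have k1: "a \<le> ?S k" unfolding k_def by (rule LeastI_ex[OF ex])
  have "k \<noteq> 0" using k1 assms by (cases "k = 0") auto
  then have "\<not> a \<le> ?S (k-1)"
    by (intro not_less_Least[of "k-1" "\<lambda>k. a \<le> ?S k", folded k_def]) simp
  then have "a \<in> blk \<beta> k" using k1 by (auto simp: blk_def)
  then show ?thesis by blast
qed


definition Mset :: "nat \<Rightarrow> (nat \<times> nat) set \<Rightarrow> 'a::field mat set" where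
  "Mset N S = {x \<in> carrier_mat N N. \<forall>i<N. \<forall>j<N. x $$ (i, j) \<noteq> 0 \<longrightarrow> (i + 1, j + 1) \<in> S}"

lemma ut_Mset: "ut N R = Mset N R" by (simp add: ut_def Mset_def)

lemma Mset_mult:
  assumes "x \<in> Mset N S" "y \<in> Mset N T" "\<And>a b c. (a,b) \<in> S \<Longrightarrow> (b,c) \<in> T \<Longrightarrow> (a,c) \<in> U"
  shows "x * y \<in> Mset N U"
proof -
  have c: "x \<in> carrier_mat N N" "y \<in> carrier_mat N N" using assms by (auto simp: Mset_def)
  have "(i + 1, j + 1) \<in> U" if ij: "i < N" "j < N" "(x * y) $$ (i, j) \<noteq> 0" for i j
  proof -
    have "(x * y) $$ (i, j) = (\<Sum>k \<in> {0..<N}. x $$ (i,k) * y $$ (k,j))"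
      using c ij by (simp add: scalar_prod_def)
    with ij have "(\<Sum>k \<in> {0..<N}. x $$ (i,k) * y $$ (k,j)) \<noteq> 0" by simp
    then obtain k where k: "k \<in> {0..<N}" "x $$ (i,k) * y $$ (k,j) \<noteq> 0"
      by (rule sum.not_neutral_contains_not_neutral)
    then have "(i+1,k+1) \<in> S" "(k+1,j+1) \<in> T" using assms(1,2) ij by (auto simp: Mset_def)
    then show ?thesis using assms(3) by blast
  qed
  then show ?thesis using c by (auto simp: Mset_def)
qed


lemma one_Mset:
  assumes "\<And>a. 1 \<le> a \<Longrightarrow> a \<le> N \<Longrightarrow> (a,a) \<in> S" shows "(1\<^sub>m N :: 'a::field mat) \<in> Mset N S"
  using assms by (auto simp: Mset_def)

lemma finite_carrier_mat_fin: "finite (carrier_mat N M :: 'a::finite mat set)"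
proof -
  let ?I = "{0..<N} \<times> {0..<M}"
  let ?f = "\<lambda>A :: 'a mat. restrict (\<lambda>p. A $$ p) ?I"
  have "inj_on ?f (carrier_mat N M)"
  proof (rule inj_onI)
    fix A B :: "'a mat" assume A: "A \<in> carrier_mat N M" and B: "B \<in> carrier_mat N M" and e: "?f A = ?f B"
    show "A = B"
    proof (rule eq_matI)
      fix i j assume "i < dim_row B" "j < dim_col B"
      then have "(i,j) \<in> ?I" using B by auto
      then show "A $$ (i,j) = B $$ (i,j)" using fun_cong[OF e, of "(i,j)"] by auto
    qed (use A B in auto)
  qed
  moreover have "?f ` carrier_mat N M \<subseteq> PiE ?I (\<lambda>_. UNIV)" by (intro image_subsetI) (simp add: restrict_PiE_iff)
  moreover have "finite (PiE ?I (\<lambda>_. (UNIV :: 'a set)))" by (intro finite_PiE) auto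
  ultimately show ?thesis by (meson finite_imageD finite_subset)
qed

lemma inv_Mset:
  assumes g: "(g :: 'a::{finite,field} mat) \<in> Mset N D" and h: "h \<in> carrier_mat N N"
    and gh: "g * h = 1\<^sub>m N" and hg: "h * g = 1\<^sub>m N"
    and refl: "\<And>a. 1 \<le> a \<Longrightarrow> a \<le> N \<Longrightarrow> (a,a) \<in> D"
    and tr: "\<And>a b c. (a,b) \<in> D \<Longrightarrow> (b,c) \<in> D \<Longrightarrow> (a,c) \<in> D"
  shows "h \<in> Mset N D"
proof -
  let ?B = "Mset N D :: 'a mat set"
  have gc: "g \<in> carrier_mat N N" using g by (auto simp: Mset_def)
  have fin: "finite ?B" by (rule finite_subset[OF _ finite_carrier_mat_fin[of N N]]) (auto simp: Mset_def)
  have sub: "(\<lambda>k. g * k) ` ?B \<subseteq> ?B" proof (rule image_subsetI)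
    fix k assume "k \<in> ?B" then show "g * k \<in> ?B" using Mset_mult[OF g, of k D D] tr by blast
  qed
  have inj: "inj_on (\<lambda>k. g * k) ?B"
  proof (rule inj_onI)
    fix k1 k2 assume k1: "k1 \<in> ?B" and k2: "k2 \<in> ?B" and e: "g * k1 = g * k2"
    have c1: "k1 \<in> carrier_mat N N" and c2: "k2 \<in> carrier_mat N N" using k1 k2 by (auto simp: Mset_def)
    have "k1 = (h * g) * k1" using c1 hg by simp
    also have "\<dots> = h * (g * k1)" using c1 gc h by simp
    also have "\<dots> = h * (g * k2)" using e by simp
    also have "\<dots> = (h * g) * k2" using c2 gc h by simp
    also have "\<dots> = k2" using c2 hg by simp
    finally show "k1 = k2" .
  qed
  have "(\<lambda>k. g * k) ` ?B = ?B" by (rule endo_inj_surj[OF fin sub inj])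
  moreover have "1\<^sub>m N \<in> ?B" by (rule one_Mset[OF refl])
  ultimately have "1\<^sub>m N \<in> (\<lambda>k. g * k) ` ?B" by simp
  then obtain k where k: "k \<in> ?B" "g * k = 1\<^sub>m N" by auto
  have kc: "k \<in> carrier_mat N N" using k by (auto simp: Mset_def)
  have "h = h * (g * k)" using k h by simp
  also have "\<dots> = (h * g) * k" using kc gc h by simp
  also have "\<dots> = k" using hg kc by simp
  finally show ?thesis using k by simp
qed

lemma normalize_Mset:
  assumes g: "(g :: 'a::field mat) \<in> Mset N D" and h: "h \<in> Mset N D"
    and gh: "g * h = 1\<^sub>m N" and hg: "h * g = 1\<^sub>m N"
    and DF: "\<And>a b c. (a,b) \<in> D \<Longrightarrow> (b,c) \<in> F \<Longrightarrow> (a,c) \<in> F"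
    and FD: "\<And>a b c. (a,b) \<in> F \<Longrightarrow> (b,c) \<in> D \<Longrightarrow> (a,c) \<in> F"
  shows "{g * u * h | u. u \<in> UT N F} = UT N F"
proof -
  have gc: "g \<in> carrier_mat N N" and hc: "h \<in> carrier_mat N N" using g h by (auto simp: Mset_def)
  have conj: "g * (1\<^sub>m N + x) * h = 1\<^sub>m N + g * x * h" if xc: "x \<in> carrier_mat N N" for x
  proof -
    have "g * (1\<^sub>m N + x) = g + g * x" using gc xc by (simp add: mult_add_distrib_mat[OF gc one_carrier_mat xc])
    then have "g * (1\<^sub>m N + x) * h = (g + g * x) * h" by simp
    also have "\<dots> = g * h + g * x * h" using gc xc hc by (simp add: add_mult_distrib_mat)
    finally show ?thesis using gh by simp
  qed
  show ?thesis
  proof (intro equalityI subsetI)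
    fix v :: "'a mat" assume "v \<in> {g * u * h | u. u \<in> UT N F}"
    then obtain x :: "'a mat" where x: "x \<in> Mset N F" "v = g * (1\<^sub>m N + x) * h"
      by (auto simp: UT_def ut_Mset)
    have xc: "x \<in> carrier_mat N N" using x by (auto simp: Mset_def)
    have "g * x * h \<in> Mset N F" using Mset_mult[OF Mset_mult[OF g x(1) DF] h FD] .
    then show "v \<in> UT N F" using x conj[OF xc] by (auto simp: UT_def ut_Mset)
  next
    fix v :: "'a mat" assume "v \<in> UT N F"
    then obtain y :: "'a mat" where y: "y \<in> Mset N F" "v = 1\<^sub>m N + y" by (auto simp: UT_def ut_Mset)
    have yc: "y \<in> carrier_mat N N" using y by (auto simp: Mset_def)
    have hyg: "h * y * g \<in> Mset N F" using Mset_mult[OF Mset_mult[OF h y(1) DF] g FD] .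
    have hygc: "h * y * g \<in> carrier_mat N N" using hyg by (auto simp: Mset_def)
    have hyc: "h * y \<in> carrier_mat N N" using hc yc by simp
    have ghyc: "g * h * y \<in> carrier_mat N N" using gc hc yc by simp
    have "g * (h * y * g) = (g * (h * y)) * g" using assoc_mult_mat[OF gc hyc gc] by simp
    also have "g * (h * y) = g * h * y" using assoc_mult_mat[OF gc hc yc] by simp
    finally have "g * (h * y * g) * h = (g * h * y * g) * h" by simp
    also have "\<dots> = (g * h) * y * (g * h)" using assoc_mult_mat[OF ghyc gc hc] by simp
    also have "\<dots> = y" using gh yc by simp
    finally have "g * (1\<^sub>m N + h * y * g) * h = v" using conj[OF hygc] y by simp
    moreover have "1\<^sub>m N + h * y * g \<in> UT N F" using hyg by (auto simp: UT_def ut_Mset)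
    ultimately show "v \<in> {g * u * h | u. u \<in> UT N F}" by blast
  qed
qed


lemma perm_left:
  assumes A: "(A :: 'a::field mat) \<in> carrier_mat N N" and s: "\<And>r. r < N \<Longrightarrow> \<sigma> r < N"
    and r: "r < N" and c: "c < N"
  shows "(mat N N (\<lambda>(i,j). if j = \<sigma> i then 1 else 0) * A) $$ (r,c) = A $$ (\<sigma> r, c)"
proof -
  have "(mat N N (\<lambda>(i,j). if j = \<sigma> i then 1 else 0) * A) $$ (r,c)
      = (\<Sum>l\<in>{0..<N}. (if l = \<sigma> r then 1 else 0) * A $$ (l, c))"
    using A r c by (auto simp: scalar_prod_def intro!: sum.cong)
  also have "\<dots> = (\<Sum>l\<in>{0..<N}. if l = \<sigma> r then A $$ (l, c) else 0)"
    by (rule sum.cong) auto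
  also have "\<dots> = A $$ (\<sigma> r, c)" using s[OF r] by (simp add: sum.delta)
  finally show ?thesis .
qed

lemma perm_right:
  assumes A: "(A :: 'a::field mat) \<in> carrier_mat N N" and s: "\<And>r. r < N \<Longrightarrow> \<sigma> r < N"
    and ss: "\<And>r. r < N \<Longrightarrow> \<sigma> (\<sigma> r) = r"
    and r: "r < N" and c: "c < N"
  shows "(A * mat N N (\<lambda>(i,j). if j = \<sigma> i then 1 else 0)) $$ (r,c) = A $$ (r, \<sigma> c)"
proof -
  have "(A * mat N N (\<lambda>(i,j). if j = \<sigma> i then 1 else 0)) $$ (r,c)
      = (\<Sum>l\<in>{0..<N}. A $$ (r, l) * (if c = \<sigma> l then 1 else 0))"
    using A r c by (auto simp: scalar_prod_def intro!: sum.cong)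
  also have "\<dots> = (\<Sum>l\<in>{0..<N}. if l = \<sigma> c then A $$ (r, l) else 0)"
    by (rule sum.cong) (use s ss c in auto)
  also have "\<dots> = A $$ (r, \<sigma> c)" using s[OF c] by (simp add: sum.delta)
  finally show ?thesis .
qed

lemma swap_closed:
  assumes lc: "levi_compatible TYPE('a::field) \<beta> R" and comp: "composition \<beta> N"
    and ab: "(a,b) \<in> R" and cb: "c \<in> blk \<beta> k" and c'b: "c' \<in> blk \<beta> k"
    and sw: "sw = (\<lambda>r. if r = c - 1 then c' - 1 else if r = c' - 1 then c - 1 else r)"
  shows "(sw (a-1) + 1, sw (b-1) + 1) \<in> R"
proof -
  have NN: "sum_list \<beta> = N" using comp by (simp add: composition_def)
  have sp: "subposet {1..N} R (Qpos \<beta>)" and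
    norm: "(Levi \<beta> :: 'a mat set) \<subseteq> normalizer N (UT N R)"
    using lc NN by (auto simp: levi_compatible_def)
  have Rsub: "R \<subseteq> {1..N} \<times> {1..N}" and irr: "irrefl R" using sp by (auto simp: subposet_def strict_po_def)
  have a: "1 \<le> a" "a \<le> N" and b: "1 \<le> b" "b \<le> N" using ab Rsub by auto
  have "a \<noteq> b" using ab irr by (auto simp: irrefl_def)
  have c: "1 \<le> c" "c \<le> N" and c': "1 \<le> c'" "c' \<le> N" using blk_sub[OF comp cb] blk_sub[OF comp c'b] by auto
  have s: "\<And>r. r < N \<Longrightarrow> sw r < N" using c c' sw by auto
  have ss: "\<And>r. sw (sw r) = r" using sw by auto
  define P :: "'a mat" where "P = mat N N (\<lambda>(i,j). if j = sw i then 1 else 0)"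
  have Pc: "P \<in> carrier_mat N N" by (simp add: P_def)
  have PP: "P * P = 1\<^sub>m N"
  proof (rule eq_matI)
    fix i j assume "i < dim_row (1\<^sub>m N :: 'a mat)" "j < dim_col (1\<^sub>m N :: 'a mat)"
    then have ij: "i < N" "j < N" by auto
    have "(P * P) $$ (i,j) = P $$ (sw i, j)" unfolding P_def by (rule perm_left[OF _ s ij]) (simp add: P_def[symmetric] Pc)
    also have "\<dots> = (if i = j then 1 else 0)" using ij s[OF ij(1)] ss by (auto simp: P_def)
    finally show "(P * P) $$ (i,j) = 1\<^sub>m N $$ (i,j)" using ij by simp
  qed (use Pc in auto)
  have "P \<in> Levi \<beta>"
  proof -
    have "P \<in> GL N" unfolding GL_def invertible_mat_def inverts_mat_def using Pc PP by auto
    moreover have "\<exists>k. 1 \<le> k \<and> k \<le> length \<beta> \<and> i + 1 \<in> blk \<beta> k \<and> j + 1 \<in> blk \<beta> k"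
      if ij: "i < N" "j < N" "P $$ (i,j) \<noteq> 0" for i j
    proof -
      have j: "j = sw i" using ij by (auto simp: P_def split: if_splits)
      show ?thesis
      proof (cases "i = c - 1 \<or> i = c' - 1")
        case True
        then have "i + 1 \<in> blk \<beta> k \<and> j + 1 \<in> blk \<beta> k" using j sw c c' cb c'b by auto
        then show ?thesis using blk_range[OF cb] by blast
      next
        case False
        then have "j = i" using j sw by auto
        obtain k' where "i + 1 \<in> blk \<beta> k'" using blk_cover[OF comp, of "i+1"] ij by auto
        then show ?thesis using \<open>j = i\<close> blk_range by blast
      qed
    qed
    ultimately show ?thesis using NN by (auto simp: Levi_def)
  qed
  then have "P \<in> normalizer N (UT N R)" using norm by auto
  then have eqs: "{P * u * P | u. u \<in> UT N R} = UT N R" using Pc PP by (auto simp: normalizer_def)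
  define E :: "'a mat" where "E = mat N N (\<lambda>(r,s). if (r,s) = (a-1,b-1) then 1 else 0)"
  have Ec: "E \<in> carrier_mat N N" by (simp add: E_def)
  have "E \<in> ut N R" using Ec ab a b by (auto simp: ut_def E_def split: if_splits)
  then have "1\<^sub>m N + E \<in> UT N R" by (auto simp: UT_def)
  then have "P * (1\<^sub>m N + E) * P \<in> UT N R" using eqs by blast
  then obtain y :: "'a mat" where y: "y \<in> ut N R" "P * (1\<^sub>m N + E) * P = 1\<^sub>m N + y"
    by (auto simp: UT_def)
  let ?r = "sw (a-1)" and ?s = "sw (b-1)"
  have rs: "?r < N" "?s < N" using s a b by auto
  have "a - 1 \<noteq> b - 1" using a b \<open>a \<noteq> b\<close> by simp
  have "?r \<noteq> ?s" using \<open>a - 1 \<noteq> b - 1\<close> by (metis ss)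
  have uc: "1\<^sub>m N + E \<in> carrier_mat N N" using Ec by simp
  have "(P * (1\<^sub>m N + E) * P) $$ (?r, ?s) = (P * (1\<^sub>m N + E)) $$ (?r, sw ?s)"
    unfolding P_def by (rule perm_right[OF _ s ss rs]) (use uc Pc in \<open>simp add: P_def[symmetric]\<close>)
  also have "\<dots> = (1\<^sub>m N + E) $$ (sw ?r, sw ?s)"
    unfolding P_def by (rule perm_left[OF uc s rs(1)]) (use s rs in auto)
  also have "\<dots> = (1\<^sub>m N + E) $$ (a - 1, b - 1)" by (simp only: ss)
  also have "\<dots> = 1\<^sub>m N $$ (a - 1, b - 1) + E $$ (a - 1, b - 1)"
    using a b Ec by (intro index_add_mat(1)) auto
  also have "E $$ (a - 1, b - 1) = 1" using a b unfolding E_def by (subst index_mat) auto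
  also have "1\<^sub>m N $$ (a - 1, b - 1) = (0::'a)" using a b \<open>a - 1 \<noteq> b - 1\<close> by (subst index_one_mat) auto
  finally have e1: "(P * (1\<^sub>m N + E) * P) $$ (?r, ?s) = 1" by (simp only: add_0_left)
  have yc: "y \<in> carrier_mat N N" using y(1) by (simp add: ut_def)
  have "(1\<^sub>m N + y) $$ (?r, ?s) = 1\<^sub>m N $$ (?r, ?s) + y $$ (?r, ?s)"
    by (rule index_add_mat(1)) (use rs yc in auto)
  also have "1\<^sub>m N $$ (?r, ?s) = (0::'a)" by (subst index_one_mat) (use rs \<open>?r \<noteq> ?s\<close> in auto)
  finally have y1: "(1\<^sub>m N + y) $$ (?r, ?s) = y $$ (?r, ?s)" by (simp only: add_0_left)
  have "(1\<^sub>m N + y) $$ (?r, ?s) = 1" using e1 by (simp only: y(2))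
  then have yv: "y $$ (?r, ?s) = 1" using y1 by (simp only:)
  have "\<forall>i<N. \<forall>j<N. y $$ (i,j) \<noteq> 0 \<longrightarrow> (i+1,j+1) \<in> R" using y(1) by (simp add: ut_def)
  then have "y $$ (?r, ?s) \<noteq> 0 \<longrightarrow> (?r + 1, ?s + 1) \<in> R" using rs by blast
  then show ?thesis using yv by simp
qed


lemma closure_R:
  assumes lc: "levi_compatible TYPE('a::field) \<beta> R" and comp: "composition \<beta> N"
    and ab: "(a,b) \<in> R" and a: "a \<in> blk \<beta> i" "a' \<in> blk \<beta> i" and b: "b \<in> blk \<beta> j" "b' \<in> blk \<beta> j"
  shows "(a',b') \<in> R"
proof -
  have "R \<subseteq> Qpos \<beta>" using lc by (auto simp: levi_compatible_def subposet_def)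
  then obtain i' j' where "i' < j'" "a \<in> blk \<beta> i'" "b \<in> blk \<beta> j'" using ab by (auto simp: Qpos_def)
  then have "i < j" using blk_unique a(1) b(1) by metis
  have a1: "1 \<le> a" "1 \<le> a'" using blk_sub[OF comp a(1)] blk_sub[OF comp a(2)] by auto
  have b1: "1 \<le> b" "1 \<le> b'" using blk_sub[OF comp b(1)] blk_sub[OF comp b(2)] by auto
  have nb: "b \<noteq> a" "b \<noteq> a'" "a' \<noteq> b" "a' \<noteq> b'" using blk_unique a b \<open>i < j\<close> by (metis less_irrefl)+
  define sw1 where "sw1 = (\<lambda>r::nat. if r = a - 1 then a' - 1 else if r = a' - 1 then a - 1 else r)"
  have "(sw1 (a-1) + 1, sw1 (b-1) + 1) \<in> R"
    by (rule swap_closed[OF lc comp ab a(1) a(2) sw1_def])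
  moreover have "sw1 (a-1) + 1 = a'" "sw1 (b-1) + 1 = b" using a1 b1 nb by (auto simp: sw1_def)
  ultimately have ab': "(a', b) \<in> R" by simp
  define sw2 where "sw2 = (\<lambda>r::nat. if r = b - 1 then b' - 1 else if r = b' - 1 then b - 1 else r)"
  have "(sw2 (a'-1) + 1, sw2 (b-1) + 1) \<in> R"
    by (rule swap_closed[OF lc comp ab' b(1) b(2) sw2_def])
  moreover have "sw2 (a'-1) + 1 = a'" "sw2 (b-1) + 1 = b'" using a1 b1 nb by (auto simp: sw2_def)
  ultimately show ?thesis by simp
qed

theorem mainTheorem3:
  fixes \<beta> :: "nat list" and N :: nat
  assumes "composition \<beta> N"
  shows "bij_betw (fat \<beta>)
           {P. subposet {1..length \<beta>} P (chain_order (length \<beta>))}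
           {R. levi_compatible TYPE('a::{finite,field}) \<beta> R}"
proof -
  note comp = assms
  let ?l = "length \<beta>"
  have NN: "sum_list \<beta> = N" using comp by (simp add: composition_def)
  define D where "D = {(a,b). \<exists>k. 1 \<le> k \<and> k \<le> ?l \<and> a \<in> blk \<beta> k \<and> b \<in> blk \<beta> k}"
  have Dtr: "(a,c) \<in> D" if "(a,b) \<in> D" "(b,c) \<in> D" for a b c
    using that blk_unique unfolding D_def by blast
  have Drefl: "(a,a) \<in> D" if "1 \<le> a" "a \<le> N" for a
    using blk_cover[OF comp that] blk_range unfolding D_def by blast
  have LeviM: "(Levi \<beta> :: 'a mat set) \<subseteq> Mset N D"
    unfolding Levi_def Mset_def GL_def D_def NN by auto
  have fat_lc: "levi_compatible TYPE('a) \<beta> (fat \<beta> P)"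
    if P: "subposet {1..?l} P (chain_order ?l)" for P
  proof -
    let ?F = "fat \<beta> P"
    have Pc: "P \<subseteq> chain_order ?l" and irrP: "irrefl P" and trP: "trans P"
      using P by (auto simp: subposet_def strict_po_def)
    have "?F \<subseteq> {1..N} \<times> {1..N}" using blk_sub[OF comp] by (force simp: fat_def)
    moreover have "irrefl ?F"
      using irrP blk_unique unfolding irrefl_def fat_def by blast
    moreover have "trans ?F"
    proof (rule transI)
      fix x y z assume "(x,y) \<in> ?F" "(y,z) \<in> ?F"
      then obtain i j j' k where "(i,j) \<in> P" "x \<in> blk \<beta> i" "y \<in> blk \<beta> j"
        "(j',k) \<in> P" "y \<in> blk \<beta> j'" "z \<in> blk \<beta> k" by (auto simp: fat_def)
      then show "(x,z) \<in> ?F" using blk_unique trP unfolding fat_def trans_def by blast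
    qed
    moreover have "?F \<subseteq> Qpos \<beta>" using Pc by (force simp: fat_def Qpos_def chain_order_def)
    moreover have "(Levi \<beta> :: 'a mat set) \<subseteq> normalizer N (UT N ?F)"
    proof
      fix g :: "'a mat" assume gL: "g \<in> Levi \<beta>"
      have gM: "g \<in> Mset N D" using gL LeviM by auto
      have gG: "g \<in> GL N" using gL NN by (simp add: Levi_def)
      have "{g * u * h | u. u \<in> UT N ?F} = UT N ?F"
        if h: "h \<in> carrier_mat N N" "g * h = 1\<^sub>m N" "h * g = 1\<^sub>m N" for h
      proof -
        have hM: "h \<in> Mset N D" by (rule inv_Mset[OF gM h Drefl Dtr])
        show ?thesis
        proof (rule normalize_Mset[OF gM hM h(2,3)])
          fix a b c assume "(a,b) \<in> D" "(b,c) \<in> ?F" then show "(a,c) \<in> ?F"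
            using blk_unique unfolding D_def fat_def by blast
        next
          fix a b c assume "(a,b) \<in> ?F" "(b,c) \<in> D" then show "(a,c) \<in> ?F"
            using blk_unique unfolding D_def fat_def by blast
        qed
      qed
      then show "g \<in> normalizer N (UT N ?F)" using gG by (auto simp: normalizer_def)
    qed
    ultimately show ?thesis using NN by (simp add: levi_compatible_def subposet_def strict_po_def)
  qed
  have inj: "inj_on (fat \<beta>) {P. subposet {1..?l} P (chain_order ?l)}"
  proof (rule inj_onI)
    fix P P' assume "P \<in> {P. subposet {1..?l} P (chain_order ?l)}" "P' \<in> {P. subposet {1..?l} P (chain_order ?l)}"
      and e: "fat \<beta> P = fat \<beta> P'"
    then have Pc: "P \<subseteq> chain_order ?l" "P' \<subseteq> chain_order ?l" by (auto simp: subposet_def)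
    have sub: "Q \<subseteq> Q'" if "Q \<subseteq> chain_order ?l" "fat \<beta> Q = fat \<beta> Q'" for Q Q'
    proof
      fix p assume "p \<in> Q"
      then obtain i j where p: "p = (i,j)" "(i,j) \<in> Q" by (cases p) auto
      then have "1 \<le> i" "i \<le> ?l" "1 \<le> j" "j \<le> ?l" using that by (auto simp: chain_order_def)
      then obtain a b where "a \<in> blk \<beta> i" "b \<in> blk \<beta> j" using blk_nonempty[OF comp] by metis
      then have "(a,b) \<in> fat \<beta> Q" using p by (auto simp: fat_def)
      then have "(a,b) \<in> fat \<beta> Q'" using that by simp
      then show "p \<in> Q'" using blk_unique \<open>a \<in> blk \<beta> i\<close> \<open>b \<in> blk \<beta> j\<close> p unfolding fat_def by blast
    qed
    show "P = P'" using sub[OF Pc(1) e] sub[OF Pc(2) e[symmetric]] by blast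
  qed
  have surj: "R \<in> fat \<beta> ` {P. subposet {1..?l} P (chain_order ?l)}"
    if lc: "levi_compatible TYPE('a) \<beta> R" for R
  proof -
    have Rq: "R \<subseteq> Qpos \<beta>" and trR: "trans R"
      using lc by (auto simp: levi_compatible_def subposet_def strict_po_def)
    define P where "P = {(i,j). (i,j) \<in> chain_order ?l \<and> (\<exists>a b. a \<in> blk \<beta> i \<and> b \<in> blk \<beta> j \<and> (a,b) \<in> R)}"
    have cl: "(a',b') \<in> R" if "(a,b) \<in> R" "a \<in> blk \<beta> i" "a' \<in> blk \<beta> i" "b \<in> blk \<beta> j" "b' \<in> blk \<beta> j"
      for a b a' b' i j
      by (rule closure_R[OF lc comp that])
    have "P \<subseteq> chain_order ?l" by (auto simp: P_def)
    moreover have "trans P"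
    proof (rule transI)
      fix i j k assume "(i,j) \<in> P" "(j,k) \<in> P"
      then obtain a b b' c where w: "(i,j) \<in> chain_order ?l" "(j,k) \<in> chain_order ?l"
        "a \<in> blk \<beta> i" "b \<in> blk \<beta> j" "(a,b) \<in> R" "b' \<in> blk \<beta> j" "c \<in> blk \<beta> k" "(b',c) \<in> R"
        by (auto simp: P_def)
      have "(a,b') \<in> R" using cl[OF w(5) w(3) w(3) w(4) w(6)] .
      then have "(a,c) \<in> R" using w(8) trR by (auto dest: transD)
      moreover have "(i,k) \<in> chain_order ?l" using w(1,2) by (auto simp: chain_order_def)
      ultimately show "(i,k) \<in> P" using w by (auto simp: P_def)
    qed
    ultimately have Ps: "subposet {1..?l} P (chain_order ?l)"
      by (auto simp: subposet_def strict_po_def chain_order_def irrefl_def)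
    have "fat \<beta> P = R"
    proof
      show "fat \<beta> P \<subseteq> R"
      proof
        fix p assume "p \<in> fat \<beta> P"
        then obtain x y i j where p: "p = (x,y)" "(i,j) \<in> P" "x \<in> blk \<beta> i" "y \<in> blk \<beta> j"
          by (auto simp: fat_def)
        then obtain a b where "a \<in> blk \<beta> i" "b \<in> blk \<beta> j" "(a,b) \<in> R" by (auto simp: P_def)
        then show "p \<in> R" using cl p by blast
      qed
    next
      show "R \<subseteq> fat \<beta> P"
      proof
        fix p assume "p \<in> R"
        then obtain x y where p: "p = (x,y)" "(x,y) \<in> R" by (cases p) auto
        then obtain i j where ij: "1 \<le> i" "i < j" "j \<le> ?l" "x \<in> blk \<beta> i" "y \<in> blk \<beta> j"
          using Rq by (auto simp: Qpos_def)
        then have "(i,j) \<in> P" using p by (auto simp: P_def chain_order_def)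
        then show "p \<in> fat \<beta> P" using ij p by (auto simp: fat_def)
      qed
    qed
    then show ?thesis using Ps by blast
  qed
  show ?thesis unfolding bij_betw_def
  proof
    show "inj_on (fat \<beta>) {P. subposet {1..?l} P (chain_order ?l)}" by (rule inj)
    show "fat \<beta> ` {P. subposet {1..?l} P (chain_order ?l)} = {R. levi_compatible TYPE('a) \<beta> R}"
      using fat_lc surj by blast
  qed
qed

end
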